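(* Let $p>0$ and suppose $\mathbb{E}|Y_0|^p<\infty$ and $\mathbb{E}|\varepsilon_1|^p<\infty$. Consider the TAR(1) model $Y_t=Y_{t-1}+\varepsilon_t$ if $Y_{t-1}>r$, $Y_t=\beta Y_{t-1}+\varepsilon_t$ if $Y_{t-1}\le r$ ($t\ge1$), with $\beta<1$ and $r\in\mathbb{R}$. Then there is a constant $C$ (depending only on $p,\beta,r$, not on $n$ or on the event) such that for every $n\ge 0$ and every event $A$, $$\mathbb{E}|Y_n|^pI\{Y_n\le r, A\}\le C\Big(\sup_k\mathbb{E}|\varepsilon_k|^pI\{A\}+\mathbb{E}|Y_0|^pI\{A\}+\mathbb{P}(A)\Big).$$
   Context: Standing assumptions: $\{\varepsilon_t\}_{t\ge1}$ is an i.i.d. sequence of real random variables with $\mathbb{E}\varepsilon_1=0$ and $\mathbb{E}\varepsilon_1^2=\sigma^2\in(0,\infty)$; the initial value $Y_0$ is a random variable independent of $\{\varepsilon_t\}_{t\ge1}$. $I\{\cdot\}$ denotes an indicator, and $I\{Y_n\le r,A\}$ the indicator of $\{Y_n\le r\}\cap A$. *)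

theory Defs
  imports "HOL-Probability.Probability"
begin

primrec tarY :: "real \<Rightarrow> real \<Rightarrow> ('a \<Rightarrow> real) \<Rightarrow> (nat \<Rightarrow> 'a \<Rightarrow> real) \<Rightarrow> nat \<Rightarrow> 'a \<Rightarrow> real" where
  "tarY \<beta> r Y0 eps 0 x = Y0 x"
| "tarY \<beta> r Y0 eps (Suc t) x =
     (if tarY \<beta> r Y0 eps t x > r then tarY \<beta> r Y0 eps t x + eps (Suc t) x
      else \<beta> * tarY \<beta> r Y0 eps t x + eps (Suc t) x)"

end

theory Submission imports Defs begin

lemma pow_powr: "0 \<le> (d::real) \<Longrightarrow> (d^k) powr p = (d powr p)^k"
  by (induction k) (auto simp: powr_mult)

lemma geom_bound:
  assumes "0 \<le> (d::real)" "d < 1"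
  shows "(\<Sum>j\<le>n. d^(n-j)) \<le> 1/(1-d)"
proof (induction n)
  case 0 then show ?case using assms by (simp add: field_simps)
next
  case (Suc n)
  have "(\<Sum>j\<le>Suc n. d^(Suc n-j)) = d * (\<Sum>j\<le>n. d^(n-j)) + 1"
    by (simp add: sum_distrib_left Suc_diff_le)
  also have "\<dots> \<le> d * (1/(1-d)) + 1" using mult_left_mono[OF Suc.IH assms(1)] by simp
  also have "\<dots> = 1/(1-d)" using assms by (simp add: field_simps)
  finally show ?case .
qed

lemma max_trick:
  fixes x :: "nat \<Rightarrow> real"
  assumes x: "\<And>j. 0 \<le> x j" and d: "0 \<le> d" "d < 1" and p: "0 < p"
  shows "(\<Sum>j\<le>n. (d^2)^(n-j) * x j) powr p
     \<le> (1/(1-d)) powr p * (\<Sum>j\<le>n. (d powr p)^(n-j) * x j powr p)"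
proof -
  define y where "y j = d^(n-j) * x j" for j
  define m where "m = Max (y ` {..n})"
  have ym: "y j \<le> m" if "j \<le> n" for j using that by (simp add: m_def)
  obtain j0 where j0: "j0 \<le> n" "m = y j0"
  proof -
    have "m \<in> y ` {..n}" unfolding m_def by (rule Max_in) auto
    then show ?thesis using that by auto
  qed
  have y0: "0 \<le> y j" for j by (simp add: y_def x d)
  have m0: "0 \<le> m" using j0 y0 by simp
  have "(\<Sum>j\<le>n. (d^2)^(n-j) * x j) = (\<Sum>j\<le>n. d^(n-j) * y j)"
    by (simp add: y_def power2_eq_square power_mult_distrib mult.assoc)
  also have "\<dots> \<le> (\<Sum>j\<le>n. d^(n-j) * m)"
    by (rule sum_mono) (simp add: mult_left_mono ym d)
  also have "\<dots> = m * (\<Sum>j\<le>n. d^(n-j))" by (simp add: sum_distrib_left mult.commute)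
  also have "\<dots> \<le> m * (1/(1-d))" using geom_bound[OF d] m0 by (rule mult_left_mono)
  finally have S: "(\<Sum>j\<le>n. (d^2)^(n-j) * x j) \<le> m * (1/(1-d))" .
  have "(\<Sum>j\<le>n. (d^2)^(n-j) * x j) powr p \<le> (m * (1/(1-d))) powr p"
    by (rule powr_mono2) (use p S x d in \<open>auto intro!: sum_nonneg\<close>)
  also have "\<dots> = (1/(1-d)) powr p * m powr p" using m0 d powr_mult[of m "1/(1-d)" p] by (simp only: mult.commute)
  also have "m powr p = (d powr p)^(n-j0) * x j0 powr p"
    using j0 d x by (simp add: y_def powr_mult pow_powr)
  also have "\<dots> \<le> (\<Sum>j\<le>n. (d powr p)^(n-j) * x j powr p)"
    by (rule member_le_sum[where f="\<lambda>j. (d powr p)^(n-j) * x j powr p"]) (use j0 in auto)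
  finally show ?thesis using d by (simp add: mult_left_mono)
qed

lemma powr_sum2:
  assumes "0 \<le> (a::real)" "0 \<le> b" "0 < p"
  shows "(a + b) powr p \<le> 2 powr p * a powr p + 2 powr p * b powr p"
proof -
  have "(a+b) powr p \<le> (2 * max a b) powr p"
    by (rule powr_mono2) (use assms in auto)
  also have "\<dots> = 2 powr p * max a b powr p" using assms by (simp add: powr_mult)
  also have "max a b powr p \<le> a powr p + b powr p" by (simp add: max_def)
  finally show ?thesis by (simp add: distrib_left)
qed

lemma aux_abs: "(b::real) \<le> z \<Longrightarrow> z + a \<le> r \<Longrightarrow> \<bar>z+a\<bar> \<le> \<bar>b\<bar> + \<bar>r\<bar> + \<bar>a\<bar>"
  by (simp add: abs_le_iff abs_if split: if_splits)

lemma tar_bound: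
  fixes \<beta> r :: real and Yi :: "'a \<Rightarrow> real" and eps :: "nat \<Rightarrow> 'a \<Rightarrow> real"
  assumes "\<beta> < 1"
  defines "V \<equiv> \<lambda>j x. if j = 0 then \<bar>Yi x\<bar> else (\<bar>\<beta>\<bar>+1)*\<bar>r\<bar> + \<bar>eps j x\<bar>"
  shows "tarY \<beta> r Yi eps n x \<le> r \<Longrightarrow> \<bar>tarY \<beta> r Yi eps n x\<bar> \<le> (\<Sum>j\<le>n. (max \<beta> 0)^(n-j) * V j x)"
proof (induction n)
  case 0 then show ?case by (simp add: V_def)
next
  case (Suc n)
  define c where "c = max \<beta> 0"
  have V0: "0 \<le> V j x" for j by (simp add: V_def)
  have c0: "0 \<le> c" by (simp add: c_def)
  have Sn0: "0 \<le> (\<Sum>j\<le>n. c^(n-j) * V j x)" by (intro sum_nonneg) (simp add: V0 c0)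
  have eq: "(\<Sum>j\<le>Suc n. c^(Suc n-j) * V j x) = c * (\<Sum>j\<le>n. c^(n-j) * V j x) + V (Suc n) x"
    by (simp add: sum_distrib_left Suc_diff_le mult.assoc)
  have VS: "V (Suc n) x = (\<bar>\<beta>\<bar>+1)*\<bar>r\<bar> + \<bar>eps (Suc n) x\<bar>" by (simp add: V_def)
  let ?y = "tarY \<beta> r Yi eps n x"
  have main: "\<bar>tarY \<beta> r Yi eps (Suc n) x\<bar> \<le> c * (\<Sum>j\<le>n. c^(n-j) * V j x) + V (Suc n) x"
  proof (cases "?y > r")
    case True
    then have "tarY \<beta> r Yi eps (Suc n) x = ?y + eps (Suc n) x" by simp
    with Suc.prems True have "\<bar>tarY \<beta> r Yi eps (Suc n) x\<bar> \<le> \<bar>r\<bar> + \<bar>eps (Suc n) x\<bar>" by auto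
    moreover have "\<bar>r\<bar> \<le> (\<bar>\<beta>\<bar>+1)*\<bar>r\<bar>" by (simp add: distrib_right)
    ultimately show ?thesis using VS mult_nonneg_nonneg[OF c0 Sn0] by linarith
  next
    case False
    then have Y: "tarY \<beta> r Yi eps (Suc n) x = \<beta> * ?y + eps (Suc n) x" by simp
    show ?thesis
    proof (cases "\<beta> \<ge> 0")
      case True
      then have "c = \<beta>" by (simp add: c_def)
      have IH: "\<bar>?y\<bar> \<le> (\<Sum>j\<le>n. c^(n-j) * V j x)" using Suc.IH False c_def by simp
      have "\<bar>tarY \<beta> r Yi eps (Suc n) x\<bar> \<le> \<beta> * \<bar>?y\<bar> + \<bar>eps (Suc n) x\<bar>"
        using Y True by (simp add: abs_mult) (metis abs_mult abs_of_nonneg abs_triangle_ineq True)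
      also have "\<dots> \<le> c * (\<Sum>j\<le>n. c^(n-j) * V j x) + \<bar>eps (Suc n) x\<bar>"
        using IH \<open>c = \<beta>\<close> True by (simp add: mult_left_mono)
      finally have h: "\<bar>tarY \<beta> r Yi eps (Suc n) x\<bar> \<le> c * (\<Sum>j\<le>n. c^(n-j) * V j x) + \<bar>eps (Suc n) x\<bar>" .
      have "\<bar>eps (Suc n) x\<bar> \<le> V (Suc n) x" using VS by simp
      with h show ?thesis by linarith
    next
      case neg: False
      have "\<beta> * ?y \<ge> \<beta> * r" using False neg by (simp add: mult_left_mono_neg)
      moreover have "\<beta>*?y + eps (Suc n) x \<le> r" using Suc.prems Y by simp
      ultimately have "\<bar>\<beta>*?y + eps (Suc n) x\<bar> \<le> \<bar>\<beta>*r\<bar> + \<bar>r\<bar> + \<bar>eps (Suc n) x\<bar>"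
        by (rule aux_abs)
      then have "\<bar>tarY \<beta> r Yi eps (Suc n) x\<bar> \<le> \<bar>\<beta>\<bar> * \<bar>r\<bar> + \<bar>r\<bar> + \<bar>eps (Suc n) x\<bar>"
        by (simp only: Y abs_mult)
      then show ?thesis using VS mult_nonneg_nonneg[OF c0 Sn0] by (simp add: distrib_right)
    qed
  qed
  show ?case using main eq c_def by simp
qed

theorem lemma3p1:
  fixes p \<beta> r :: real
  assumes "p > 0" and "\<beta> < 1"
  shows "\<exists>C::real. \<forall>(M :: 'a measure) (Y0 :: 'a \<Rightarrow> real) (eps :: nat \<Rightarrow> 'a \<Rightarrow> real).
    (prob_space M
     \<and> prob_space.indep_vars M (\<lambda>_. borel) (\<lambda>i. if i = 0 then Y0 else eps i) UNIV
     \<and> (\<forall>k\<ge>1. distr M borel (eps k) = distr M borel (eps 1))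
     \<and> integrable M (eps 1) \<and> (\<integral>x. eps 1 x \<partial>M) = 0
     \<and> integrable M (\<lambda>x. (eps 1 x)\<^sup>2) \<and> (\<integral>x. (eps 1 x)\<^sup>2 \<partial>M) > 0
     \<and> (\<integral>\<^sup>+x. ennreal (\<bar>Y0 x\<bar> powr p) \<partial>M) < \<infinity>
     \<and> (\<integral>\<^sup>+x. ennreal (\<bar>eps 1 x\<bar> powr p) \<partial>M) < \<infinity>)
    \<longrightarrow> (\<forall>n. \<forall>A \<in> sets M.
          (\<integral>\<^sup>+x. ennreal (\<bar>tarY \<beta> r Y0 eps n x\<bar> powr p
                      * indicator ({y. tarY \<beta> r Y0 eps n y \<le> r} \<inter> A) x) \<partial>M)
          \<le> ennreal C * ((SUP k\<in>{1..}. \<integral>\<^sup>+x. ennreal (\<bar>eps k x\<bar> powr p * indicator A x) \<partial>M)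
                        + (\<integral>\<^sup>+x. ennreal (\<bar>Y0 x\<bar> powr p * indicator A x) \<partial>M)
                        + emeasure M A))"
proof -
  define c where "c = max \<beta> 0"
  define d where "d = sqrt c"
  define e where "e = d powr p"
  define K where "K = (\<bar>\<beta>\<bar>+1)*\<bar>r\<bar>"
  define Q where "Q = 2 powr p * (K powr p + 1)"
  define B where "B = (1/(1-d)) powr p"
  define C where "C = B * (1/(1-e)) * Q"
  have c0: "0 \<le> c" "c < 1" using assms by (auto simp: c_def)
  have d0: "0 \<le> d" "d < 1" using c0 by (auto simp: d_def)
  have dc: "d^2 = c" using c0 by (simp add: d_def)
  have e0: "0 \<le> e" by (simp add: e_def)
  have e1: "e < 1"
  proof (cases "d = 0")
    case True then show ?thesis by (simp add: e_def)
  next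
    case False
    then have "d powr p < 1 powr p" using d0 assms(1) by (intro powr_less_mono2) auto
    then show ?thesis by (simp add: e_def)
  qed
  have K0: "0 \<le> K" by (simp add: K_def)
  have B0: "0 \<le> B" by (simp add: B_def)
  have Q1: "1 \<le> Q"
  proof -
    have "1 \<le> 2 powr p" using assms(1) by (simp add: ge_one_powr_ge_zero)
    moreover have "1 \<le> K powr p + 1" by simp
    ultimately show ?thesis unfolding Q_def using mult_mono[of 1 "2 powr p" 1 "K powr p + 1"] by simp
  qed
  show ?thesis
  proof (rule exI[of _ C], intro allI impI ballI)
    fix M :: "'a measure" and Y0 :: "'a \<Rightarrow> real" and eps :: "nat \<Rightarrow> 'a \<Rightarrow> real" and n A
    assume H: "prob_space M
     \<and> prob_space.indep_vars M (\<lambda>_. borel) (\<lambda>i. if i = 0 then Y0 else eps i) UNIV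
     \<and> (\<forall>k\<ge>1. distr M borel (eps k) = distr M borel (eps 1))
     \<and> integrable M (eps 1) \<and> (\<integral>x. eps 1 x \<partial>M) = 0
     \<and> integrable M (\<lambda>x. (eps 1 x)\<^sup>2) \<and> (\<integral>x. (eps 1 x)\<^sup>2 \<partial>M) > 0
     \<and> (\<integral>\<^sup>+x. ennreal (\<bar>Y0 x\<bar> powr p) \<partial>M) < \<infinity>
     \<and> (\<integral>\<^sup>+x. ennreal (\<bar>eps 1 x\<bar> powr p) \<partial>M) < \<infinity>"
    assume A: "A \<in> sets M"
    from H have PS: "prob_space M" by blast
    from H have IV: "prob_space.indep_vars M (\<lambda>_. borel) (\<lambda>i. if i = 0 then Y0 else eps i) UNIV" by blast
    interpret prob_space M by (rule PS)
    have rv: "\<And>i. (if i = 0 then Y0 else eps i) \<in> borel_measurable M"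
      using IV unfolding indep_vars_def2 by auto
    have mY: "Y0 \<in> borel_measurable M" using rv[of 0] by simp
    have mE: "eps j \<in> borel_measurable M" if "j \<noteq> 0" for j using rv[of j] that by simp
    define V where "V j x = (if j = 0 then \<bar>Y0 x\<bar> else K + \<bar>eps j x\<bar>)" for j x
    have V0: "0 \<le> V j x" for j x by (simp add: V_def K0)
    have tb: "\<bar>tarY \<beta> r Y0 eps n x\<bar> \<le> (\<Sum>j\<le>n. c^(n-j) * V j x)" if "tarY \<beta> r Y0 eps n x \<le> r" for x
      using tar_bound[OF assms(2), where Yi=Y0 and eps=eps and n=n and x=x and r=r] that unfolding V_def K_def c_def by simp
    define G where "G j x = ennreal (V j x powr p * indicator A x)" for j x
    have eqR: "ennreal B * (\<Sum>j\<le>n. ennreal (e^(n-j)) * G j x)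
        = ennreal (B * (\<Sum>j\<le>n. e^(n-j) * (V j x powr p * indicator A x)))" for x
    proof -
      have "(\<Sum>j\<le>n. ennreal (e^(n-j)) * G j x) = (\<Sum>j\<le>n. ennreal (e^(n-j) * (V j x powr p * indicator A x)))"
        unfolding G_def by (intro sum.cong refl) (simp add: ennreal_mult e0)
      also have "\<dots> = ennreal (\<Sum>j\<le>n. e^(n-j) * (V j x powr p * indicator A x))"
        by (rule sum_ennreal) (simp add: e0)
      finally show ?thesis using B0 by (simp add: ennreal_mult sum_nonneg e0)
    qed
    have pw: "ennreal (\<bar>tarY \<beta> r Y0 eps n x\<bar> powr p * indicator ({y. tarY \<beta> r Y0 eps n y \<le> r} \<inter> A) x)
        \<le> ennreal B * (\<Sum>j\<le>n. ennreal (e^(n-j)) * G j x)" for x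
    proof (cases "x \<in> A \<and> tarY \<beta> r Y0 eps n x \<le> r")
      case True
      have "\<bar>tarY \<beta> r Y0 eps n x\<bar> powr p \<le> (\<Sum>j\<le>n. c^(n-j) * V j x) powr p"
        by (rule powr_mono2) (use tb True assms(1) in auto)
      also have "\<dots> \<le> B * (\<Sum>j\<le>n. e^(n-j) * V j x powr p)"
        using max_trick[of "\<lambda>j. V j x" d p n] V0 d0 assms(1) by (simp add: dc B_def e_def)
      finally show ?thesis unfolding eqR using True by (intro ennreal_leI) simp
    next
      case False
      then show ?thesis by (auto simp: indicator_def)
    qed
    have measG: "(\<lambda>x. G j x) \<in> borel_measurable M" for j
    proof (cases "j = 0")
      case True then show ?thesis unfolding G_def V_def using mY A by simp measurable
    next
      case False then show ?thesis unfolding G_def V_def using mE[OF False] A by simp measurable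
    qed
    let ?S = "SUP k\<in>{1..}. \<integral>\<^sup>+x. ennreal (\<bar>eps k x\<bar> powr p * indicator A x) \<partial>M"
    let ?E = "\<integral>\<^sup>+x. ennreal (\<bar>Y0 x\<bar> powr p * indicator A x) \<partial>M"
    let ?R = "?S + ?E + emeasure M A"
    have Gb: "(\<integral>\<^sup>+x. G j x \<partial>M) \<le> ennreal Q * ?R" for j
    proof (cases "j = 0")
      case True
      have "(\<integral>\<^sup>+x. G j x \<partial>M) = ?E" using True by (simp add: G_def V_def)
      also have "\<dots> \<le> ?R" by (simp add: add_increasing2 add_increasing)
      also have "\<dots> = ennreal 1 * ?R" by simp
      also have "\<dots> \<le> ennreal Q * ?R" using Q1 by (intro mult_right_mono ennreal_leI) auto
      finally show ?thesis .
    next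
      case False
      have "G j x \<le> ennreal (2 powr p * K powr p) * indicator A x
          + ennreal (2 powr p) * ennreal (\<bar>eps j x\<bar> powr p * indicator A x)" for x
      proof (cases "x \<in> A")
        case True
        have "(K + \<bar>eps j x\<bar>) powr p \<le> 2 powr p * K powr p + 2 powr p * \<bar>eps j x\<bar> powr p"
          by (rule powr_sum2) (use K0 assms(1) in auto)
        then show ?thesis using True False
          by (simp add: G_def V_def ennreal_plus[symmetric] ennreal_mult[symmetric] del: ennreal_plus)
      qed (simp add: G_def)
      then have "(\<integral>\<^sup>+x. G j x \<partial>M) \<le> \<integral>\<^sup>+x. ennreal (2 powr p * K powr p) * indicator A x
          + ennreal (2 powr p) * ennreal (\<bar>eps j x\<bar> powr p * indicator A x) \<partial>M"
        by (intro nn_integral_mono) auto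
      also have "\<dots> = ennreal (2 powr p * K powr p) * emeasure M A
          + ennreal (2 powr p) * (\<integral>\<^sup>+x. ennreal (\<bar>eps j x\<bar> powr p * indicator A x) \<partial>M)"
        using A mE[OF False] by (simp add: nn_integral_add nn_integral_cmult nn_integral_cmult_indicator)
      also have "\<dots> \<le> ennreal (2 powr p * K powr p) * ?R + ennreal (2 powr p) * ?R"
      proof (intro add_mono mult_left_mono)
        show "emeasure M A \<le> ?R" by (simp add: add_increasing)
        have "(\<integral>\<^sup>+x. ennreal (\<bar>eps j x\<bar> powr p * indicator A x) \<partial>M) \<le> ?S"
          by (rule SUP_upper) (use False in auto)
        then show "(\<integral>\<^sup>+x. ennreal (\<bar>eps j x\<bar> powr p * indicator A x) \<partial>M) \<le> ?R"
          by (simp add: add_increasing2)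
      qed auto
      also have "\<dots> = ennreal Q * ?R"
      proof -
        have "ennreal Q = ennreal (2 powr p * K powr p) + ennreal (2 powr p)"
          unfolding Q_def by (simp add: distrib_left ennreal_plus)
        then show ?thesis by (simp only: distrib_right)
      qed
      finally show ?thesis .
    qed
    have "(\<integral>\<^sup>+x. ennreal (\<bar>tarY \<beta> r Y0 eps n x\<bar> powr p * indicator ({y. tarY \<beta> r Y0 eps n y \<le> r} \<inter> A) x) \<partial>M)
        \<le> \<integral>\<^sup>+x. ennreal B * (\<Sum>j\<le>n. ennreal (e^(n-j)) * G j x) \<partial>M"
      by (intro nn_integral_mono pw)
    also have "\<dots> = ennreal B * (\<Sum>j\<le>n. ennreal (e^(n-j)) * (\<integral>\<^sup>+x. G j x \<partial>M))"
      using measG by (simp add: nn_integral_cmult nn_integral_sum)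
    also have "\<dots> \<le> ennreal B * (\<Sum>j\<le>n. ennreal (e^(n-j)) * (ennreal Q * ?R))"
      by (intro mult_left_mono sum_mono Gb) auto
    also have "\<dots> = ennreal B * (ennreal (\<Sum>j\<le>n. e^(n-j)) * (ennreal Q * ?R))"
      by (simp only: sum_distrib_right[symmetric] sum_ennreal[OF zero_le_power[OF e0]])
    also have "\<dots> \<le> ennreal B * (ennreal (1/(1-e)) * (ennreal Q * ?R))"
      using geom_bound[OF e0 e1, of n] by (intro mult_left_mono mult_right_mono ennreal_leI) auto
    also have "\<dots> = ennreal C * ?R"
    proof -
      have 1: "0 \<le> 1/(1-e)" using e1 by simp
      have "ennreal C = ennreal (B * ((1/(1-e)) * Q))" unfolding C_def mult.assoc ..
      also have "\<dots> = ennreal B * ennreal ((1/(1-e)) * Q)" by (rule ennreal_mult) (use B0 1 Q1 in auto)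
      also have "\<dots> = ennreal B * (ennreal (1/(1-e)) * ennreal Q)" by (subst ennreal_mult) (use 1 Q1 in auto)
      finally show ?thesis by (simp only: mult.assoc)
    qed
    finally show "(\<integral>\<^sup>+x. ennreal (\<bar>tarY \<beta> r Y0 eps n x\<bar> powr p * indicator ({y. tarY \<beta> r Y0 eps n y \<le> r} \<inter> A) x) \<partial>M)
        \<le> ennreal C * ?R" .
  qed
qed

end
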